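(* Let $(M,\mathcal{T})$ be a closed pseudo $3$-manifold with $v(e)\ge9$ for every $e\in E$. Let $\{l(t):t\in[0,\infty)\}\subset\mathbb{R}^E_{>0}$ be the solution of the extended Ricci flow with initial data $l^0\in(0,\operatorname{arccosh}2)^E$ satisfying $l^0_e\in(\operatorname{arccosh}(1+\mu_{v(e)}),\operatorname{arccosh}(b_{v(e)}))$ for all $e\in E$. If there exists $t_0>0$ with $\sup\{l_e(t):0\le t\le t_0,\ e\in E\}\le\operatorname{arccosh}2$, then for all $t\in[0,t_0]$ and all $e\in E$, $$l_e(t)\in[\operatorname{arccosh}(1+\mu_{v(e)}),\operatorname{arccosh}b_{v(e)}]\subset(0,\operatorname{arccosh}2].$$
   Context: A closed pseudo $3$-manifold $(M,\mathcal{T})$: a finite disjoint union $\widehat{\mathcal{T}}$ of tetrahedra with faces glued in pairs by affine homeomorphisms; $\mathcal{T}$ the quotient complex, $E$ its edge set, $P_E$ the quotient map on edges, $v(e)=|P_E^{-1}(e)|$. For an interval $I$, $I^E=\{l: l_e\in I\ \forall e\}$. For $l\in\mathbb{R}^E_{>0}$ each edge $\hat e$ of $\widehat{\mathcal{T}}$ gets length $l_{P_E(\hat e)}$; in a tetrahedron with vertices $i,j,k,h$ let $x_{ab}=\cosh$(length of $ab$) and $$\phi_{ij}=\frac{x_{ik}x_{ih}+x_{jk}x_{jh}+x_{ij}x_{ik}x_{jh}+x_{ij}x_{ih}x_{jk}-x_{ij}^2x_{kh}+x_{kh}}{\sqrt{2x_{ij}x_{ik}x_{jk}+x_{ij}^2+x_{ik}^2+x_{jk}^2-1}\sqrt{2x_{ij}x_{ih}x_{jh}+x_{ij}^2+x_{ih}^2+x_{jh}^2-1}},$$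 dihedral angle $\alpha_{ij}=\arccos(\max\{-1,\min\{\phi_{ij},1\}\})$; $\widetilde K_e(l)=2\pi-\sum_{\hat e\in P_E^{-1}(e)}\alpha(\hat e)$. Extended Ricci flow: $\frac{d}{dt}l_e=\widetilde K_e(l)l_e$, $l(0)=l^0$ (unique solution for all $t\ge0$). Constants: $b_9=2$, $b_n=\frac{16}{1+\cos(2\pi/n)}-7$ ($n\ge10$). $\eta_\xi(y)=\frac{-2-5y+(1+\xi)^2+\sqrt{(2+5y-(1+\xi)^2)^2+4(2+y)(1-y)(1+\xi)^2}}{2+y}$; $\xi_1=0$, $\xi_{k+1}=\eta_{\xi_k}(\cos(2\pi/9))$, $\xi_\infty=\lim_k\xi_k$ (the sequence is nondecreasing and bounded); $\mu_n=\eta_{\xi_\infty}(\cos(2\pi/n))$ for $n\ge9$. *)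

theory Defs
  imports "HOL-Analysis.Analysis"
begin

text \<open>A finite set T of tetrahedra; every tetrahedron has vertices 0,1,2,3.
  A face is a pair (t,k), meaning the face of t opposite to vertex k.
  The gluing is a fixed-point-free involution g on the set of faces together
  with, for every face f, the vertex bijection phi f from the vertices of f
  onto the vertices of g f (this determines the affine gluing map);
  phi (g f) is the inverse of phi f.  Closedness: every face is glued.\<close>

definition tet_faces :: "'a set \<Rightarrow> ('a \<times> nat) set" where
  "tet_faces T = {(t,k). t \<in> T \<and> k < 4}"

definition hat_edges :: "'a set \<Rightarrow> ('a \<times> nat set) set" where
  "hat_edges T = {(t,S). t \<in> T \<and> S \<subseteq> {..<4} \<and> card S = 2}"

definition closed_pseudo_3_manifold ::
  "'a set \<Rightarrow> ('a \<times> nat \<Rightarrow> 'a \<times> nat) \<Rightarrow> ('a \<times> nat \<Rightarrow> nat \<Rightarrow> nat) \<Rightarrow> bool" where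
  "closed_pseudo_3_manifold T g \<phi> \<longleftrightarrow> finite T \<and>
     (\<forall>f\<in>tet_faces T. g f \<in> tet_faces T \<and> g f \<noteq> f \<and> g (g f) = f \<and>
        bij_betw (\<phi> f) ({..<4} - {snd f}) ({..<4} - {snd (g f)}) \<and>
        (\<forall>v\<in>{..<4} - {snd f}. \<phi> (g f) (\<phi> f v) = v))"

definition edge_glue ::
  "'a set \<Rightarrow> ('a \<times> nat \<Rightarrow> 'a \<times> nat) \<Rightarrow> ('a \<times> nat \<Rightarrow> nat \<Rightarrow> nat) \<Rightarrow> (('a \<times> nat set) \<times> ('a \<times> nat set)) set" where
  "edge_glue T g \<phi> = {((t,S),(t',S')). (t,S) \<in> hat_edges T \<and>
      (\<exists>k<4. k \<notin> S \<and> fst (g (t,k)) = t' \<and> S' = \<phi> (t,k) ` S)}"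

definition edge_rel ::
  "'a set \<Rightarrow> ('a \<times> nat \<Rightarrow> 'a \<times> nat) \<Rightarrow> ('a \<times> nat \<Rightarrow> nat \<Rightarrow> nat) \<Rightarrow> (('a \<times> nat set) \<times> ('a \<times> nat set)) set" where
  "edge_rel T g \<phi> = Id_on (hat_edges T) \<union> (edge_glue T g \<phi> \<union> (edge_glue T g \<phi>)\<inverse>)\<^sup>+"

definition edges :: "'a set \<Rightarrow> ('a \<times> nat \<Rightarrow> 'a \<times> nat) \<Rightarrow> ('a \<times> nat \<Rightarrow> nat \<Rightarrow> nat) \<Rightarrow> ('a \<times> nat set) set set" where
  "edges T g \<phi> = hat_edges T // edge_rel T g \<phi>"

definition proj_edge ::
  "'a set \<Rightarrow> ('a \<times> nat \<Rightarrow> 'a \<times> nat) \<Rightarrow> ('a \<times> nat \<Rightarrow> nat \<Rightarrow> nat) \<Rightarrow> 'a \<times> nat set \<Rightarrow> ('a \<times> nat set) set" where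
  "proj_edge T g \<phi> he = edge_rel T g \<phi> `` {he}"

definition valence :: "('a \<times> nat set) set \<Rightarrow> nat" where
  "valence e = card e"

definition phi_formula :: "real \<Rightarrow> real \<Rightarrow> real \<Rightarrow> real \<Rightarrow> real \<Rightarrow> real \<Rightarrow> real" where
  "phi_formula xij xik xih xjk xjh xkh =
     (xik * xih + xjk * xjh + xij * xik * xjh + xij * xih * xjk - xij^2 * xkh + xkh) /
     (sqrt (2 * xij * xik * xjk + xij^2 + xik^2 + xjk^2 - 1) *
      sqrt (2 * xij * xih * xjh + xij^2 + xih^2 + xjh^2 - 1))"

definition dihedral ::
  "'a set \<Rightarrow> ('a \<times> nat \<Rightarrow> 'a \<times> nat) \<Rightarrow> ('a \<times> nat \<Rightarrow> nat \<Rightarrow> nat) \<Rightarrow>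
   (('a \<times> nat set) set \<Rightarrow> real) \<Rightarrow> 'a \<times> nat set \<Rightarrow> real" where
  "dihedral T g \<phi> l he =
    (let t = fst he; S = snd he; C = {..<4} - S;
         i = Min S; j = Max S; k = Min C; h = Max C;
         x = (\<lambda>a b. cosh (l (proj_edge T g \<phi> (t, {a,b}))))
     in arccos (max (-1) (min (phi_formula (x i j) (x i k) (x i h) (x j k) (x j h) (x k h)) 1)))"

definition ext_curv ::
  "'a set \<Rightarrow> ('a \<times> nat \<Rightarrow> 'a \<times> nat) \<Rightarrow> ('a \<times> nat \<Rightarrow> nat \<Rightarrow> nat) \<Rightarrow>
   (('a \<times> nat set) set \<Rightarrow> real) \<Rightarrow> ('a \<times> nat set) set \<Rightarrow> real" where
  "ext_curv T g \<phi> l e = 2 * pi - (\<Sum>he\<in>e. dihedral T g \<phi> l he)"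

definition ext_ricci_flow_solution ::
  "'a set \<Rightarrow> ('a \<times> nat \<Rightarrow> 'a \<times> nat) \<Rightarrow> ('a \<times> nat \<Rightarrow> nat \<Rightarrow> nat) \<Rightarrow>
   (real \<Rightarrow> ('a \<times> nat set) set \<Rightarrow> real) \<Rightarrow> (('a \<times> nat set) set \<Rightarrow> real) \<Rightarrow> bool" where
  "ext_ricci_flow_solution T g \<phi> l l0 \<longleftrightarrow>
     (\<forall>e\<in>edges T g \<phi>. l 0 e = l0 e) \<and>
     (\<forall>t\<ge>0. \<forall>e\<in>edges T g \<phi>. l t e > 0) \<and>
     (\<forall>t\<ge>0. \<forall>e\<in>edges T g \<phi>.
        ((\<lambda>s. l s e) has_real_derivative (ext_curv T g \<phi> (l t) e * l t e)) (at t within {0..}))"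

definition b_const :: "nat \<Rightarrow> real" where
  "b_const n = (if n = 9 then 2 else 16 / (1 + cos (2 * pi / real n)) - 7)"

definition eta :: "real \<Rightarrow> real \<Rightarrow> real" where
  "eta \<xi> y = (-2 - 5*y + (1+\<xi>)^2 +
      sqrt ((2 + 5*y - (1+\<xi>)^2)^2 + 4*(2+y)*(1-y)*(1+\<xi>)^2)) / (2 + y)"

text \<open>xi_seq k is xi_(k+1) of the paper: xi_1 = 0, xi_(k+1) = eta_(xi_k)(cos(2 pi/9)).\<close>
fun xi_seq :: "nat \<Rightarrow> real" where
  "xi_seq 0 = 0"
| "xi_seq (Suc k) = eta (xi_seq k) (cos (2 * pi / 9))"

definition xi_inf :: real where
  "xi_inf = lim xi_seq"

definition mu_const :: "nat \<Rightarrow> real" where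
  "mu_const n = eta xi_inf (cos (2 * pi / real n))"

end

theory Submission
  imports Defs
begin



lemma phi_sym1: "phi_formula a p q r s c = phi_formula a r s p q c"
  unfolding phi_formula_def by (simp add: algebra_simps)
lemma phi_sym2: "phi_formula a p q r s c = phi_formula a q p s r c"
  unfolding phi_formula_def by (simp add: algebra_simps)

lemma X_nonneg:
  fixes a x q r s c :: real
  assumes "a \<ge> 1" "1 \<le> x" "x \<le> 2" "1 \<le> q" "q \<le> 2" "1 \<le> r" "r \<le> 2" "1 \<le> s" "s \<le> 2" "1 \<le> c"
  shows "0 \<le> q + a * s + r * x * s - r^2 * q + c * (x + a * r)"
proof -
  have "q * (1 - r^2) \<ge> 2 * (1-r^2)"
    using assms mult_mono[of 1 r 1 r] by (intro mult_right_mono_neg) (auto simp: power2_eq_square)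
  hence f1: "2 - 2 * r^2 \<le> q - q * r^2" by (simp add: algebra_simps)
  have "s * (a + r * x) \<ge> a + r * x" using assms mult_right_mono[of 1 s "a + r * x"] by simp
  hence f2: "a + r * x \<le> s * a + s * (r * x)" by (simp add: algebra_simps)
  have "c * (x + a * r) \<ge> x + a * r" using assms mult_right_mono[of 1 c "x + a * r"] by simp
  hence f3: "x + a * r \<le> c * x + c * (a * r)" by (simp add: algebra_simps)
  have f4: "r * x \<ge> r" using assms mult_left_mono[of 1 x r] by simp
  have "a * (1+r) \<ge> 1 + r" using assms mult_right_mono[of 1 a "1 + r"] by simp
  hence f5: "1 + r \<le> a + a * r" by (simp add: algebra_simps)
  have "4 + 2 * r - 2 * r^2 = 2 * (2-r) * (1+r)" by (simp add: algebra_simps power2_eq_square)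
  hence f6: "4 + 2 * r - 2 * r^2 \<ge> 0" using assms by simp
  have e: "q + a * s + r * x * s - r^2 * q + c * (x + a * r) = (q - q * r^2) + (s * a + s * (r * x)) + (c * x + c * (a * r))"
    by (simp add: algebra_simps)
  show ?thesis unfolding e using f1 f2 f3 f4 f5 f6 assms by linarith
qed

lemma deriv_aux:
  fixes N Q :: "real \<Rightarrow> real"
  assumes N: "(N has_real_derivative N') (at x)" and Q: "(Q has_real_derivative Q') (at x)"
    and pos: "Q x > 0" and k: "k > 0"
  shows "((\<lambda>x. N x / (sqrt (Q x) * k)) has_real_derivative ((N' * Q x - N x * Q' / 2) / (Q x * sqrt (Q x) * k))) (at x)"
proof -
  define S where "S = sqrt (Q x)"
  have S: "S > 0" "Q x = S * S" using pos by (auto simp: S_def)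
  have "((\<lambda>x. N x / (sqrt (Q x) * k)) has_real_derivative
     ((N' * (sqrt (Q x) * k) - N x * (inverse (sqrt (Q x)) * Q' / 2 * k)) / ((sqrt (Q x) * k) * (sqrt (Q x) * k)))) (at x)"
    using pos k by (auto intro!: derivative_eq_intros N Q simp: field_simps)
  also have "((N' * (sqrt (Q x) * k) - N x * (inverse (sqrt (Q x)) * Q' / 2 * k)) / ((sqrt (Q x) * k) * (sqrt (Q x) * k)))
     = (N' * Q x - N x * Q' / 2) / (Q x * sqrt (Q x) * k)"
    unfolding S_def[symmetric] using S k by (simp add: field_simps)
  finally show ?thesis .
qed

lemma phi_mono1:
  fixes a p p' q r s c :: real
  assumes a: "a \<ge> 1" and p: "1 \<le> p" "p \<le> p'" "p' \<le> 2" and b: "1 \<le> q" "q \<le> 2" "1 \<le> r" "r \<le> 2" "1 \<le> s" "s \<le> 2" "1 \<le> c"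
  shows "phi_formula a p q r s c \<le> phi_formula a p' q r s c"
proof -
  define Q2 where "Q2 = 2 * a * q * s + a^2 + q^2 + s^2 - 1"
  define N where "N = (\<lambda>x::real. x * q + r * s + a * x * s + a * q * r - a^2 * c + c)"
  define Q where "Q = (\<lambda>x::real. 2 * a * x * r + a^2 + x^2 + r^2 - 1)"
  define F where "F = (\<lambda>x. N x / (sqrt (Q x) * sqrt Q2))"
  have Feq: "\<And>x. phi_formula a x q r s c = F x" by (simp add: phi_formula_def F_def N_def Q_def Q2_def)
  have sq1: "\<And>z::real. 1 \<le> z \<Longrightarrow> 1 \<le> z^2" by (simp add: one_le_power)
  have "0 \<le> a * q * s" using a b by simp
  hence Q2pos: "Q2 > 0" unfolding Q2_def using sq1[OF a] sq1[OF b(1)] sq1[OF b(5)] b by linarith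
  have Qpos: "Q x > 0" if "1 \<le> x" for x
  proof -
    have "0 \<le> a * x * r" using a b that by simp
    thus ?thesis unfolding Q_def using sq1[OF a] sq1[OF that] sq1[OF b(3)] b by linarith
  qed
  have D: "(F has_real_derivative ((q + a * s) * Q x - N x * (2 * a * r + 2 * x) / 2) / (Q x * sqrt (Q x) * sqrt Q2)) (at x)"
    if "1 \<le> x" for x
    unfolding F_def
    by (rule deriv_aux) (insert Qpos[OF that] Q2pos, auto intro!: derivative_eq_intros simp: N_def Q_def)
  have Dnn: "0 \<le> ((q + a * s) * Q x - N x * (2 * a * r + 2 * x) / 2) / (Q x * sqrt (Q x) * sqrt Q2)"
    if "1 \<le> x" "x \<le> 2" for x
  proof -
    have "(q + a * s) * Q x - N x * (2 * a * r + 2 * x) / 2 = (a^2 - 1) * (q + a * s + r * x * s - r^2 * q + c * (x + a * r))"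
      by (simp add: N_def Q_def field_simps power2_eq_square)
    moreover have "0 \<le> a^2 - 1" using sq1[OF a] by simp
    moreover have "0 \<le> q + a * s + r * x * s - r^2 * q + c * (x + a * r)"
      by (rule X_nonneg) (use a b that in auto)
    ultimately show ?thesis using Qpos[OF that(1)] Q2pos by simp
  qed
  have "F p \<le> F p'"
  proof (rule DERIV_nonneg_imp_increasing_open[OF p(2)])
    fix x assume "p < x" "x < p'"
    thus "\<exists>y. (F has_real_derivative y) (at x) \<and> 0 \<le> y" using D Dnn p by (meson less_imp_le order_trans)
  next
    show "continuous_on {p..p'} F"
      proof (rule continuous_at_imp_continuous_on, intro ballI)
      fix x assume "x \<in> {p..p'}"
      hence "1 \<le> x" using p by auto
      from DERIV_isCont[OF D[OF this]] show "isCont F x" .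
    qed
  qed
  thus ?thesis by (simp add: Feq)
qed

lemma phi_mono2:
  fixes a p q q' r s c :: real
  assumes "a \<ge> 1" "1 \<le> q" "q \<le> q'" "q' \<le> 2" "1 \<le> p" "p \<le> 2" "1 \<le> r" "r \<le> 2" "1 \<le> s" "s \<le> 2" "1 \<le> c"
  shows "phi_formula a p q r s c \<le> phi_formula a p q' r s c"
  using phi_mono1[of a q q' p s r c] assms by (simp add: phi_sym2[of a p])

lemma phi_mono3:
  fixes a p q r r' s c :: real
  assumes "a \<ge> 1" "1 \<le> r" "r \<le> r'" "r' \<le> 2" "1 \<le> p" "p \<le> 2" "1 \<le> q" "q \<le> 2" "1 \<le> s" "s \<le> 2" "1 \<le> c"
  shows "phi_formula a p q r s c \<le> phi_formula a p q r' s c"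
  using phi_mono1[of a r r' s p q c] assms by (simp add: phi_sym1[of a p])

lemma phi_mono4:
  fixes a p q r s s' c :: real
  assumes "a \<ge> 1" "1 \<le> s" "s \<le> s'" "s' \<le> 2" "1 \<le> p" "p \<le> 2" "1 \<le> q" "q \<le> 2" "1 \<le> r" "r \<le> 2" "1 \<le> c"
  shows "phi_formula a p q r s c \<le> phi_formula a p q r s' c"
proof -
  have e: "\<And>s. phi_formula a p q r s c = phi_formula a s r q p c"
    by (metis phi_sym1 phi_sym2)
  show ?thesis unfolding e using phi_mono1[of a s s' r q p c] assms by simp
qed

lemma phi_mono5:
  fixes a p q r s c c' :: real
  assumes "a \<ge> 1" "c' \<le> c" "1 \<le> p" "1 \<le> q" "1 \<le> r" "1 \<le> s"
  shows "phi_formula a p q r s c \<le> phi_formula a p q r s c'"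
proof -
  have sq1: "\<And>z::real. 1 \<le> z \<Longrightarrow> 1 \<le> z^2" by (simp add: one_le_power)
  have "0 \<le> a * p * r" "0 \<le> a * q * s" using assms by auto
  hence d: "0 < sqrt (2 * a * p * r + a^2 + p^2 + r^2 - 1) * sqrt (2 * a * q * s + a^2 + q^2 + s^2 - 1)"
    using sq1[OF assms(1)] sq1[OF assms(3)] sq1[OF assms(4)] sq1[OF assms(5)] sq1[OF assms(6)]
    by (intro mult_pos_pos real_sqrt_gt_zero; linarith)
  have "(a^2 - 1) * c' \<le> (a^2 - 1) * c" using assms sq1[OF assms(1)] by (intro mult_left_mono) auto
  hence "p * q + r * s + a * p * s + a * q * r - a^2 * c + c \<le> p * q + r * s + a * p * s + a * q * r - a^2 * c' + c'"
    by (simp add: algebra_simps)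
  thus ?thesis unfolding phi_formula_def using d by (simp add: divide_right_mono)
qed

lemma phi_ge:
  fixes a p q r s c :: real
  assumes "a \<ge> 1" "1 \<le> p" "p \<le> 2" "1 \<le> q" "q \<le> 2" "1 \<le> r" "r \<le> 2" "1 \<le> s" "s \<le> 2" "1 \<le> c" "c \<le> 2"
  shows "2 * (2 - a) / (1 + a) \<le> phi_formula a p q r s c"
proof -
  have "2 * (2 - a) / (1 + a) = phi_formula a 1 1 1 1 2"
  proof -
    have "2 * a * 1 * 1 + a^2 + 1^2 + 1^2 - 1 = (1 + a)^2" by (simp add: power2_eq_square algebra_simps)
    hence "sqrt (2 * a * 1 * 1 + a^2 + 1^2 + 1^2 - 1) = 1 + a" using assms by simp
    moreover have "1 * 1 + 1 * 1 + a * 1 * 1 + a * 1 * 1 - a^2 * 2 + 2 = 2 * (2 - a) * (1 + a)"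
      by (simp add: power2_eq_square algebra_simps)
    ultimately show ?thesis unfolding phi_formula_def using assms by (simp add: power2_eq_square)
  qed
  also have "\<dots> \<le> phi_formula a 1 1 1 1 c" using phi_mono5[of a c 2 1 1 1 1] assms by simp
  also have "\<dots> \<le> phi_formula a 1 1 1 s c" using phi_mono4[of a 1 s 1 1 1 c] assms by simp
  also have "\<dots> \<le> phi_formula a 1 1 r s c" using phi_mono3[of a 1 r 1 1 s c] assms by simp
  also have "\<dots> \<le> phi_formula a 1 q r s c" using phi_mono2[of a 1 q 1 r s c] assms by simp
  also have "\<dots> \<le> phi_formula a p q r s c" using phi_mono1[of a 1 p q r s c] assms by simp
  finally show ?thesis .
qed

lemma phi_le:
  fixes a p q r s c :: real
  assumes "a \<ge> 1" "1 \<le> p" "p \<le> 2" "1 \<le> q" "q \<le> 2" "1 \<le> r" "r \<le> 2" "1 \<le> s" "s \<le> 2" "1 \<le> c"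
  shows "phi_formula a p q r s c \<le> (8 + 8 * a + c - a^2 * c) / (a^2 + 8 * a + 7)"
proof -
  have "phi_formula a p q r s c \<le> phi_formula a 2 q r s c" using phi_mono1[of a p 2 q r s c] assms by simp
  also have "\<dots> \<le> phi_formula a 2 2 r s c" using phi_mono2[of a q 2 2 r s c] assms by simp
  also have "\<dots> \<le> phi_formula a 2 2 2 s c" using phi_mono3[of a r 2 2 2 s c] assms by simp
  also have "\<dots> \<le> phi_formula a 2 2 2 2 c" using phi_mono4[of a s 2 2 2 2 c] assms by simp
  also have "\<dots> = (8 + 8 * a + c - a^2 * c) / (a^2 + 8 * a + 7)"
  proof -
    have e: "2 * a * 2 * 2 + a^2 + 2^2 + 2^2 - 1 = a^2 + 8 * a + 7" by simp
    have "0 \<le> a^2 + 8 * a + 7" using assms by (simp add: add_nonneg_nonneg)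
    hence "sqrt (a^2 + 8 * a + 7) * sqrt (a^2 + 8 * a + 7) = a^2 + 8 * a + 7" by simp
    moreover have "2 * 2 + 2 * 2 + a * 2 * 2 + a * 2 * 2 - a^2 * c + c = 8 + 8 * a + c - a^2 * c" by simp
    ultimately show ?thesis unfolding phi_formula_def e by simp
  qed
  finally show ?thesis .
qed


lemma cos_lb: "1 - x^2 / 2 \<le> cos (x::real)"
proof -
  have "cos x = cos (2 * (x/2))" by simp
  also have "\<dots> = 1 - 2 * sin (x/2) ^ 2" by (rule cos_double_sin)
  finally have c: "cos x = 1 - 2 * sin (x/2) ^ 2" .
  have "\<bar>sin (x/2)\<bar> \<le> \<bar>x/2\<bar>" by (rule abs_sin_x_le_abs_x)
  hence "sin (x/2) ^ 2 \<le> (x/2)^2"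
    by (metis abs_ge_zero power2_abs power_mono)
  thus ?thesis unfolding c by (simp add: power2_eq_square)
qed

lemma y_bounds:
  assumes "n \<ge> 9"
  shows "3/4 \<le> cos (2 * pi / real n)" "cos (2 * pi / real n) < 1"
    "n \<ge> 10 \<Longrightarrow> 7/9 \<le> cos (2 * pi / real n)"
proof -
  have pi: "pi \<le> 3.15" using pi_approx by simp
  have n: "real n \<ge> 9" using assms by simp
  define x where "x = 2 * pi / real n"
  have x0: "0 < x" using n by (simp add: x_def)
  have x1: "x \<le> 7/10"
    using n pi unfolding x_def by (simp add: field_simps)
  have "x * x \<le> 7/10 * (7/10)" using x0 x1 by (intro mult_mono) auto
  hence "x^2 \<le> 49/100" by (simp add: power2_eq_square)
  thus "3/4 \<le> cos (2 * pi / real n)" using cos_lb[of x] unfolding x_def by linarith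
  have "0 < sin (pi / real n)" using n by (intro sin_gt_zero) (auto simp: field_simps)
  moreover have "cos (2 * pi / real n) = 1 - 2 * sin (pi / real n) ^ 2"
    using cos_double_sin[of "pi / real n"] by simp
  ultimately show "cos (2 * pi / real n) < 1" by simp
  assume "n \<ge> 10"
  hence n: "real n \<ge> 10" by simp
  have x1: "x \<le> 63/100"
    using n pi unfolding x_def by (simp add: field_simps)
  have "x * x \<le> 63/100 * (63/100)" using x0 x1 by (intro mult_mono) auto
  hence "x^2 \<le> 3969/10000" by (simp add: power2_eq_square)
  thus "7/9 \<le> cos (2 * pi / real n)" using cos_lb[of x] unfolding x_def by linarith
qed

lemma b_bounds:
  assumes "n \<ge> 9"
  shows "1 < b_const n" "b_const n \<le> 2"
proof -
  note y = y_bounds[OF assms]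
  show "1 < b_const n"
  proof (cases "n = 9")
    case False
    have "16 / (1 + cos (2 * pi / real n)) > 8" using y(1,2) by (simp add: field_simps)
    thus ?thesis using False by (simp add: b_const_def)
  qed (simp add: b_const_def)
  show "b_const n \<le> 2"
  proof (cases "n = 9")
    case False
    hence "n \<ge> 10" using assms by simp
    hence "16 / (1 + cos (2 * pi / real n)) \<le> 9" using y(1,3) by (simp add: field_simps)
    thus ?thesis using False by (simp add: b_const_def)
  qed (simp add: b_const_def)
qed

lemma b_rel:
  assumes "n \<ge> 10"
  shows "(9 - b_const n) / (b_const n + 7) = cos (2 * pi / real n)"
proof -
  have y: "3/4 \<le> cos (2 * pi / real n)" using y_bounds assms by simp
  have "n \<noteq> 9" using assms by simp
  hence "b_const n = 16 / (1 + cos (2 * pi / real n)) - 7" by (simp add: b_const_def)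
  hence e1: "b_const n + 7 = 16 / (1 + cos (2 * pi / real n))" "9 - b_const n = 16 - 16 / (1 + cos (2 * pi / real n))" by simp_all
  show ?thesis unfolding e1 using y by (simp add: field_simps)
qed

lemma eta_bounds:
  fixes \<xi> y :: real
  assumes "0 \<le> \<xi>" "\<xi> \<le> 1/4" "3/4 \<le> y" "y < 1"
  shows "0 < eta \<xi> y" "eta \<xi> y < 2 * (1 - y) / (2 + y)"
proof -
  define t where "t = (1 + \<xi>)^2"
  have t1: "1 \<le> t" using assms by (simp add: t_def one_le_power)
  have "(1 + \<xi>)^2 \<le> (5/4)^2" by (rule power_mono) (use assms in auto)
  hence t2: "t \<le> 25/16" unfolding t_def by (simp add: power2_eq_square)
  define B where "B = 2 + 5 * y - t"
  define X where "X = 4 * (2 + y) * (1 - y) * t"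
  have X: "X > 0" using assms t1 by (simp add: X_def)
  have e: "eta \<xi> y = (- B + sqrt (B^2 + X)) / (2 + y)" by (simp add: eta_def B_def X_def t_def)
  have "\<bar>B\<bar> = sqrt (B^2)" by simp
  also have "\<dots> < sqrt (B^2 + X)" using X by (intro real_sqrt_less_mono) simp
  finally have "B < sqrt (B^2 + X)" by simp
  thus "0 < eta \<xi> y" unfolding e using assms by simp
  define R where "R = 4 + 3 * y - t"
  have R: "R > 0" using assms t2 by (simp add: R_def)
  have "(3 + y) * t \<le> (3 + y) * (25/16)" using t2 assms by (intro mult_left_mono) auto
  hence "(3 + y) * t \<le> 75/16 + (25/16) * y" by (simp add: algebra_simps)
  hence "0 < 3 + 4 * y - (3 + y) * t" using assms by linarith
  hence "0 < 4 * (1 - y) * (3 + 4 * y - (3 + y) * t)" using assms by simp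
  moreover have "R^2 - (B^2 + X) = 4 * (1 - y) * (3 + 4 * y - (3 + y) * t)"
    unfolding R_def B_def X_def by (simp add: power2_eq_square algebra_simps)
  ultimately have "B^2 + X < R^2" by linarith
  hence "sqrt (B^2 + X) < sqrt (R^2)" by (rule real_sqrt_less_mono)
  hence "sqrt (B^2 + X) < R" using R by simp
  hence "eta \<xi> y < (- B + R) / (2 + y)" unfolding e using assms by (simp add: divide_strict_right_mono)
  also have "\<dots> = 2 * (1 - y) / (2 + y)" by (simp add: B_def R_def)
  finally show "eta \<xi> y < 2 * (1 - y) / (2 + y)" .
qed

lemma sqrt_step:
  fixes B0 k t1 t2 :: real
  assumes "0 \<le> k" "k \<le> 4 * B0" "t1 \<le> t2" "0 \<le> t1"
    "0 \<le> (B0 - t1)^2 + k * t1"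
  shows "t1 + sqrt ((B0 - t1)^2 + k * t1) \<le> t2 + sqrt ((B0 - t2)^2 + k * t2)"
proof -
  define d where "d = t2 - t1"
  define S2 where "S2 = sqrt ((B0 - t2)^2 + k * t2)"
  have "0 \<le> t2" using assms by linarith
  hence "0 \<le> k * t2" using assms(1) by simp
  hence V2: "0 \<le> (B0 - t2)^2 + k * t2" by (metis add_nonneg_nonneg zero_le_power2)
  have S2sq: "S2^2 = (B0 - t2)^2 + k * t2" unfolding S2_def by (rule real_sqrt_pow2[OF V2])
  have S2nn: "0 \<le> S2" unfolding S2_def by (rule real_sqrt_ge_zero[OF V2])
  have d: "0 \<le> d" using assms by (simp add: d_def)
  have "(B0 - t2 - k/2)^2 \<le> S2^2"
  proof -
    have "S2^2 - (B0 - t2 - k/2)^2 = k * (B0 - k/4)" unfolding S2sq by (simp add: power2_eq_square algebra_simps)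
    moreover have "0 \<le> k * (B0 - k/4)" using assms by simp
    ultimately show ?thesis by simp
  qed
  hence "\<bar>B0 - t2 - k/2\<bar> \<le> S2" using S2nn by (metis abs_le_square_iff abs_of_nonneg)
  hence h: "B0 - t2 - k/2 \<le> S2" by simp
  have "d * (2 * B0 - 2 * t2 - k) \<le> d * (2 * S2)" using h d by (intro mult_left_mono) auto
  hence "(B0 - t1)^2 + k * t1 \<le> (S2 + d)^2"
    unfolding power2_sum S2sq d_def by (simp add: power2_eq_square algebra_simps)
  hence "sqrt ((B0 - t1)^2 + k * t1) \<le> sqrt ((S2 + d)^2)" by (rule real_sqrt_le_mono)
  also have "\<dots> = S2 + d" using S2nn d by simp
  finally show ?thesis by (simp add: d_def S2_def)
qed

lemma eta_mono:
  fixes \<xi>1 \<xi>2 y :: real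
  assumes "0 \<le> \<xi>1" "\<xi>1 \<le> \<xi>2" "0 \<le> y" "y < 1"
  shows "eta \<xi>1 y \<le> eta \<xi>2 y"
proof -
  define k where "k = 4 * (2 + y) * (1 - y)"
  define B0 where "B0 = 2 + 5 * y"
  have t: "(1 + \<xi>1)^2 \<le> (1 + \<xi>2)^2" using assms by (intro power_mono) auto
  have k0: "0 \<le> k" using assms by (simp add: k_def)
  have kB: "k \<le> 4 * B0" using assms unfolding k_def B0_def by (simp add: algebra_simps power2_eq_square mult_nonneg_nonneg)
  have "0 \<le> k * (1 + \<xi>1)^2" using k0 by simp
  hence "(1 + \<xi>1)^2 + sqrt ((B0 - (1 + \<xi>1)^2)^2 + k * (1 + \<xi>1)^2) \<le> (1 + \<xi>2)^2 + sqrt ((B0 - (1 + \<xi>2)^2)^2 + k * (1 + \<xi>2)^2)"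
    by (intro sqrt_step k0 kB t) auto
  moreover have "\<And>z. (2 + 5 * y - z)^2 + 4 * (2 + y) * (1 - y) * z = (B0 - z)^2 + k * z" by (simp add: k_def B0_def)
  ultimately show ?thesis unfolding eta_def using assms by (simp add: divide_right_mono)
qed

lemma xi_inf_bounds: "0 \<le> xi_inf" "xi_inf \<le> 1/4"
proof -
  define y where "y = cos (2 * pi / 9)"
  have y: "3/4 \<le> y" "y < 1" using y_bounds[of 9] by (simp_all add: y_def)
  have s: "xi_seq (Suc k) = eta (xi_seq k) y" for k by (simp add: y_def)
  have b14: "2 * (1 - y) / (2 + y) \<le> 1/4" using y by (simp add: field_simps)
  have P: "0 \<le> xi_seq k \<and> xi_seq k \<le> xi_seq (Suc k) \<and> xi_seq (Suc k) \<le> 1/4" for k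
  proof (induction k)
    case 0
    have x1: "xi_seq (Suc 0) = eta 0 y" by (simp add: y_def)
    have "0 < eta 0 y" "eta 0 y < 2 * (1 - y) / (2 + y)" using eta_bounds[of 0 y] y by auto
    hence "0 \<le> xi_seq (Suc 0)" "xi_seq (Suc 0) \<le> 1/4" unfolding x1 using b14 by linarith+
    thus ?case by simp
  next
    case (Suc k)
    hence h: "0 \<le> xi_seq k" "xi_seq k \<le> xi_seq (Suc k)" "xi_seq (Suc k) \<le> 1/4" by auto
    have "xi_seq (Suc k) = eta (xi_seq k) y" by (rule s)
    also have "\<dots> \<le> eta (xi_seq (Suc k)) y" using h y by (intro eta_mono) auto
    also have "\<dots> = xi_seq (Suc (Suc k))" by (rule s[symmetric])
    finally have "xi_seq (Suc k) \<le> xi_seq (Suc (Suc k))" .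
    moreover have "eta (xi_seq (Suc k)) y < 2 * (1 - y) / (2 + y)"
      using eta_bounds[of "xi_seq (Suc k)" y] h y by (auto simp del: xi_seq.simps)
    hence "xi_seq (Suc (Suc k)) \<le> 1/4"
      unfolding s[of "Suc k"] using b14 by linarith
    ultimately show ?case using h by auto
  qed
  have inc: "incseq xi_seq" using P by (intro incseq_SucI) auto
  have bd: "\<forall>i. xi_seq i \<le> 1/4" using P by (metis dual_order.trans)
  obtain L where L: "xi_seq \<longlonglongrightarrow> L" "\<forall>i. xi_seq i \<le> L" using incseq_convergent[OF inc bd] by blast
  have "xi_inf = L" unfolding xi_inf_def using L(1) by (rule limI)
  moreover have "L \<le> 1/4" using L(1) bd by (intro LIMSEQ_le_const2) auto
  moreover have "0 \<le> L" using L(2) P[of 0] by (meson order_trans)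
  ultimately show "0 \<le> xi_inf" "xi_inf \<le> 1/4" by auto
qed

lemma mu_bounds:
  assumes "n \<ge> 9"
  shows "0 < mu_const n" "(1 + mu_const n) * (2 + cos (2 * pi / real n)) < 4 - cos (2 * pi / real n)"
proof -
  note y = y_bounds[OF assms]
  note e = eta_bounds[OF xi_inf_bounds y(1,2)]
  show "0 < mu_const n" using e by (simp add: mu_const_def)
  have "mu_const n * (2 + cos (2 * pi / real n)) < 2 * (1 - cos (2 * pi / real n))"
    using e(2) y by (simp add: mu_const_def field_simps)
  thus "(1 + mu_const n) * (2 + cos (2 * pi / real n)) < 4 - cos (2 * pi / real n)"
    by (simp add: algebra_simps)
qed


lemma barrier_lower:
  fixes f f' :: "real \<Rightarrow> real" and L T :: real
  assumes der: "\<And>t. 0 \<le> t \<Longrightarrow> (f has_real_derivative f' t) (at t within {0..})"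
    and f0: "L < f 0"
    and push: "\<And>t. 0 \<le> t \<Longrightarrow> t \<le> T \<Longrightarrow> f t = L \<Longrightarrow> f' t > 0"
  shows "\<forall>t\<in>{0..T}. L \<le> f t"
proof (rule ccontr)
  assume "\<not> ?thesis"
  then obtain t1 where t1: "0 \<le> t1" "t1 \<le> T" "f t1 < L" by auto
  have cont: "continuous_on {0..} f"
    using der by (auto simp: continuous_on_eq_continuous_within intro: DERIV_continuous)
  have cont1: "continuous_on {0..t1} f" by (rule continuous_on_subset[OF cont]) auto
  define S where "S = {0..t1} \<inter> f -` {L..}"
  have clS: "closed S" unfolding S_def by (rule continuous_closed_preimage[OF cont1]) auto
  have S0: "0 \<in> S" using f0 t1 by (simp add: S_def)
  have bdd: "bdd_above S" unfolding S_def by (rule bdd_aboveI[of _ t1]) auto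
  define s where "s = Sup S"
  have sS: "s \<in> S" unfolding s_def using closed_contains_Sup[OF _ bdd clS] S0 by auto
  have sle: "\<And>u. u \<in> S \<Longrightarrow> u \<le> s" unfolding s_def using bdd by (simp add: cSup_upper)
  have s: "0 \<le> s" "s \<le> t1" "L \<le> f s" using sS by (auto simp: S_def)
  have "s \<noteq> t1" using s t1 by auto
  hence st: "s < t1" using s by simp
  have cont2: "continuous_on {s..t1} f" by (rule continuous_on_subset[OF cont1]) (use s in auto)
  obtain u where u: "s \<le> u" "u \<le> t1" "f u = L" using IVT2'[of f t1 L s, OF _ _ _ cont2] s t1 st by auto
  have "u \<in> S" using u s by (simp add: S_def)
  hence "u = s" using sle u by force
  hence fs: "f s = L" using u by simp
  have pos: "f' s > 0" using push[OF s(1) _ fs] s t1 by simp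
  obtain d where d: "d > 0" "\<And>h. h > 0 \<Longrightarrow> s + h \<in> {0..} \<Longrightarrow> h < d \<Longrightarrow> f s < f (s + h)"
    using has_real_derivative_pos_inc_right[OF der[OF s(1)] pos] by blast
  define h where "h = min (d/2) (t1 - s)"
  have h: "h > 0" "h < d" "s + h \<le> t1" using d st by (auto simp: h_def)
  have "f s < f (s + h)" using d(2)[OF h(1) _ h(2)] h s by simp
  hence "s + h \<in> S" using fs h s by (simp add: S_def)
  hence "s + h \<le> s" by (rule sle)
  thus False using h by simp
qed

lemma barrier_upper:
  fixes f f' :: "real \<Rightarrow> real" and U T :: real
  assumes der: "\<And>t. 0 \<le> t \<Longrightarrow> (f has_real_derivative f' t) (at t within {0..})"
    and f0: "f 0 < U"
    and push: "\<And>t. 0 \<le> t \<Longrightarrow> t \<le> T \<Longrightarrow> f t = U \<Longrightarrow> f' t < 0"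
  shows "\<forall>t\<in>{0..T}. f t \<le> U"
proof -
  have "\<forall>t\<in>{0..T}. - U \<le> - f t"
  proof (rule barrier_lower[where f' = "\<lambda>t. - f' t"])
    fix t :: real assume "0 \<le> t"
    thus "((\<lambda>t. - f t) has_real_derivative - f' t) (at t within {0..})"
      using der by (intro derivative_intros) auto
  next
    show "- U < - f 0" using f0 by simp
  next
    fix t assume "0 \<le> t" "t \<le> T" "- f t = - U"
    thus "0 < - f' t" using push by fastforce
  qed
  thus ?thesis by simp
qed


lemma glue_sub:
  assumes M: "closed_pseudo_3_manifold T g \<phi>"
  shows "edge_glue T g \<phi> \<subseteq> hat_edges T \<times> hat_edges T"
proof
  fix z assume "z \<in> edge_glue T g \<phi>"
  then obtain t S t' S' k where z: "z = ((t,S),(t',S'))" "(t,S) \<in> hat_edges T" "k < 4" "k \<notin> S"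
    "fst (g (t,k)) = t'" "S' = \<phi> (t,k) ` S"
    unfolding edge_glue_def by auto
  have tS: "t \<in> T" "S \<subseteq> {..<4}" "card S = 2" using z(2) by (auto simp: hat_edges_def)
  have f: "(t,k) \<in> tet_faces T" using tS z by (simp add: tet_faces_def)
  hence g: "g (t,k) \<in> tet_faces T" "bij_betw (\<phi> (t,k)) ({..<4} - {k}) ({..<4} - {snd (g (t,k))})"
    using M unfolding closed_pseudo_3_manifold_def by auto
  have t': "t' \<in> T" using g(1) z(5) by (auto simp: tet_faces_def)
  have Ssub: "S \<subseteq> {..<4} - {k}" using tS z(4) by auto
  have "\<phi> (t,k) ` S \<subseteq> {..<4}" using Ssub g(2) unfolding bij_betw_def by auto
  moreover have "card (\<phi> (t,k) ` S) = 2"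
    using tS(3) g(2) Ssub unfolding bij_betw_def by (metis card_image inj_on_subset)
  ultimately have "(t',S') \<in> hat_edges T" using t' z(6) by (simp add: hat_edges_def)
  thus "z \<in> hat_edges T \<times> hat_edges T" using z by simp
qed

lemma equiv_edge_rel:
  assumes M: "closed_pseudo_3_manifold T g \<phi>"
  shows "equiv (hat_edges T) (edge_rel T g \<phi>)"
proof -
  define G where "G = edge_glue T g \<phi> \<union> (edge_glue T g \<phi>)\<inverse>"
  have GH: "G \<subseteq> hat_edges T \<times> hat_edges T" using glue_sub[OF M] by (auto simp: G_def)
  have GtH: "G\<^sup>+ \<subseteq> hat_edges T \<times> hat_edges T" using trancl_subset_Sigma[OF GH] .
  have symG: "sym (G\<^sup>+)" by (rule sym_trancl) (auto simp: G_def sym_def)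
  have R: "edge_rel T g \<phi> = Id_on (hat_edges T) \<union> G\<^sup>+" by (simp add: edge_rel_def G_def)
  show ?thesis unfolding R
  proof (rule equivI)
    show "Id_on (hat_edges T) \<union> G\<^sup>+ \<subseteq> hat_edges T \<times> hat_edges T" using GtH by auto
    show "refl_on (hat_edges T) (Id_on (hat_edges T) \<union> G\<^sup>+)" unfolding refl_on_def using GtH by auto
    show "sym (Id_on (hat_edges T) \<union> G\<^sup>+)" using symG unfolding sym_def by auto
    show "trans (Id_on (hat_edges T) \<union> G\<^sup>+)" unfolding trans_def
      by (auto intro: trancl_trans)
  qed
qed

lemma edge_facts:
  assumes M: "closed_pseudo_3_manifold T g \<phi>" and e: "e \<in> edges T g \<phi>" and he: "he \<in> e"
  shows "he \<in> hat_edges T" "proj_edge T g \<phi> he = e"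
proof -
  note eq = equiv_edge_rel[OF M]
  obtain x where x: "e = edge_rel T g \<phi> `` {x}" "x \<in> hat_edges T"
    using e unfolding edges_def by (erule quotientE)
  have "(x, he) \<in> edge_rel T g \<phi>" using he x by simp
  thus "he \<in> hat_edges T" using equiv_type[OF eq] by auto
  show "proj_edge T g \<phi> he = e" unfolding proj_edge_def x(1)
    using equiv_class_eq[OF eq \<open>(x, he) \<in> edge_rel T g \<phi>\<close>] by simp
qed

lemma proj_in_edges:
  assumes "h \<in> hat_edges T"
  shows "proj_edge T g \<phi> h \<in> edges T g \<phi>"
  unfolding proj_edge_def edges_def by (rule quotientI[OF assms])

lemma cosh_bounds:
  fixes x :: real
  assumes "0 < x" "x \<le> arcosh 2"
  shows "1 < cosh x" "cosh x \<le> 2"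
proof -
  have "cosh 0 < cosh x" using assms by (subst cosh_real_nonneg_less_iff) auto
  thus "1 < cosh x" by simp
  have "cosh x \<le> cosh (arcosh 2)" using assms by (subst cosh_real_nonneg_le_iff) auto
  thus "cosh x \<le> 2" by simp
qed

lemma dihedral_form:
  assumes M: "closed_pseudo_3_manifold T g \<phi>" and e: "e \<in> edges T g \<phi>" and he: "he \<in> e"
    and lt: "\<forall>e'\<in>edges T g \<phi>. 0 < lt e' \<and> lt e' \<le> arcosh 2"
  shows "\<exists>p q r s c. p \<in> {1<..2} \<and> q \<in> {1<..2} \<and> r \<in> {1<..2} \<and> s \<in> {1<..2} \<and> c \<in> {1<..2} \<and>
     dihedral T g \<phi> lt he = arccos (max (-1) (min (phi_formula (cosh (lt e)) p q r s c) 1))"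
proof -
  obtain tt S where heq: "he = (tt, S)" by (cases he)
  have hH: "(tt,S) \<in> hat_edges T" using edge_facts(1)[OF M e he] heq by simp
  have pe: "proj_edge T g \<phi> (tt,S) = e" using edge_facts(2)[OF M e he] heq by simp
  have tS: "tt \<in> T" "S \<subseteq> {..<4}" "card S = 2" using hH by (auto simp: hat_edges_def)
  define C where "C = {..<4::nat} - S"
  have fS: "finite S" using finite_subset[OF tS(2)] by simp
  have cC: "card C = 2" unfolding C_def using card_Diff_subset[OF fS tS(2)] tS by simp
  define i where "i = Min S"
  define j where "j = Max S"
  define k where "k = Min C"
  define h where "h = Max C"
  have two: "\<And>A::nat set. card A = 2 \<Longrightarrow> A = {Min A, Max A} \<and> Min A \<noteq> Max A"
  proof -
    fix A :: "nat set" assume "card A = 2"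
    then obtain u v where uv: "A = {u,v}" "u \<noteq> v" by (auto simp: card_2_iff)
    show "A = {Min A, Max A} \<and> Min A \<noteq> Max A"
      using uv by (cases "u < v") (auto simp: min_def max_def)
  qed
  have S: "S = {i,j}" "i \<noteq> j" using two[OF tS(3)] by (auto simp: i_def j_def)
  have Cs: "C = {k,h}" "k \<noteq> h" using two[OF cC] by (auto simp: k_def h_def)
  have ijkh: "i < 4" "j < 4" "k < 4" "h < 4" "i \<noteq> k" "i \<noteq> h" "j \<noteq> k" "j \<noteq> h"
    using S Cs tS(2) unfolding C_def by blast+
  have inH: "\<And>u v. u < 4 \<Longrightarrow> v < 4 \<Longrightarrow> u \<noteq> v \<Longrightarrow> (tt, {u,v}) \<in> hat_edges T"
    using tS(1) by (auto simp: hat_edges_def)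
  define X where "X = (\<lambda>u v. cosh (lt (proj_edge T g \<phi> (tt, {u,v}))))"
  have Xb: "\<And>u v. u < 4 \<Longrightarrow> v < 4 \<Longrightarrow> u \<noteq> v \<Longrightarrow> X u v \<in> {1<..2}"
  proof -
    fix u v :: nat assume "u < 4" "v < 4" "u \<noteq> v"
    hence "proj_edge T g \<phi> (tt, {u,v}) \<in> edges T g \<phi>" by (intro proj_in_edges inH)
    thus "X u v \<in> {1<..2}" using lt cosh_bounds unfolding X_def by auto
  qed
  have Xij: "X i j = cosh (lt e)" unfolding X_def using S pe by simp
  have d: "dihedral T g \<phi> lt he = arccos (max (-1) (min (phi_formula (X i j) (X i k) (X i h) (X j k) (X j h) (X k h)) 1))"
    unfolding dihedral_def heq Let_def X_def i_def j_def k_def h_def C_def by simp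
  have b: "X i k \<in> {1<..2}" "X i h \<in> {1<..2}" "X j k \<in> {1<..2}" "X j h \<in> {1<..2}" "X k h \<in> {1<..2}"
    using Xb[OF ijkh(1) ijkh(3) ijkh(5)] Xb[OF ijkh(1) ijkh(4) ijkh(6)] Xb[OF ijkh(2) ijkh(3) ijkh(7)]
      Xb[OF ijkh(2) ijkh(4) ijkh(8)] Xb[OF ijkh(3) ijkh(4) Cs(2)] by auto
  show ?thesis
    apply (rule exI[where x="X i k"], rule exI[where x="X i h"], rule exI[where x="X j k"], rule exI[where x="X j h"], rule exI[where x="X k h"])
    using b d unfolding Xij by simp
qed

lemma curv_pos:
  assumes M: "closed_pseudo_3_manifold T g \<phi>" and e: "e \<in> edges T g \<phi>" and n: "valence e \<ge> 9"
    and lt: "\<forall>e'\<in>edges T g \<phi>. 0 < lt e' \<and> lt e' \<le> arcosh 2"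
    and le: "lt e = arcosh (1 + mu_const (valence e))"
  shows "ext_curv T g \<phi> lt e > 0"
proof -
  define N where "N = valence e"
  define y where "y = cos (2 * pi / real N)"
  have n9: "N \<ge> 9" using n by (simp add: N_def)
  have y: "3/4 \<le> y" "y < 1" using y_bounds[OF n9] by (simp_all add: y_def)
  have mu: "0 < mu_const N" "(1 + mu_const N) * (2 + y) < 4 - y" using mu_bounds[OF n9] by (simp_all add: y_def)
  define a where "a = 1 + mu_const N"
  have a1: "1 \<le> a" using mu by (simp add: a_def)
  have ca: "cosh (lt e) = a" unfolding le a_def N_def using mu(1) N_def by simp
  have ay: "y < 2 * (2 - a) / (1 + a)"
  proof -
    have "y * (1 + a) < 2 * (2 - a)" using mu(2) unfolding a_def[symmetric] by (simp add: algebra_simps)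
    thus ?thesis using a1 by (simp add: pos_less_divide_eq)
  qed
  have ang: "arccos y = 2 * pi / real N"
    unfolding y_def using n9 by (intro arccos_cos) (auto simp: field_simps)
  have dh: "dihedral T g \<phi> lt he < 2 * pi / real N" if he: "he \<in> e" for he
  proof -
    obtain p q r s c where pqrsc: "p \<in> {1<..2}" "q \<in> {1<..2}" "r \<in> {1<..2}" "s \<in> {1<..2}" "c \<in> {1<..2}"
      and d: "dihedral T g \<phi> lt he = arccos (max (-1) (min (phi_formula (cosh (lt e)) p q r s c) 1))"
      using dihedral_form[OF M e he lt] by blast
    have "2 * (2 - a) / (1 + a) \<le> phi_formula a p q r s c"
      using pqrsc a1 by (intro phi_ge) auto
    hence ph: "y < phi_formula a p q r s c" using ay by linarith
    define v where "v = max (-1) (min (phi_formula a p q r s c) 1)"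
    have v: "y < v" "v \<le> 1" using ph y by (auto simp: v_def)
    have "arccos v < arccos y" using v y by (intro arccos_less_arccos) auto
    thus ?thesis unfolding d ca v_def[symmetric] ang .
  qed
  have fin: "finite e" "e \<noteq> {}" using n9 unfolding N_def valence_def by (auto intro: card_ge_0_finite)
  have "(\<Sum>he\<in>e. dihedral T g \<phi> lt he) < (\<Sum>he\<in>e. 2 * pi / real N)"
    by (rule sum_strict_mono[OF fin]) (use dh in auto)
  also have "\<dots> = 2 * pi" using n9 by (simp add: N_def valence_def)
  finally show ?thesis unfolding ext_curv_def by simp
qed

lemma curv_neg:
  assumes M: "closed_pseudo_3_manifold T g \<phi>" and e: "e \<in> edges T g \<phi>" and n: "valence e \<ge> 10"
    and lt: "\<forall>e'\<in>edges T g \<phi>. 0 < lt e' \<and> lt e' \<le> arcosh 2"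
    and le: "lt e = arcosh (b_const (valence e))"
  shows "ext_curv T g \<phi> lt e < 0"
proof -
  define N where "N = valence e"
  define y where "y = cos (2 * pi / real N)"
  have n10: "N \<ge> 10" using n by (simp add: N_def)
  hence n9: "N \<ge> 9" by simp
  have y: "3/4 \<le> y" "y < 1" using y_bounds[OF n9] by (simp_all add: y_def)
  define a where "a = b_const N"
  have a1: "1 < a" "a \<le> 2" using b_bounds[OF n9] by (simp_all add: a_def)
  have ca: "cosh (lt e) = a" unfolding le a_def N_def using a1 N_def a_def by simp
  have ya: "y = (9 - a) / (a + 7)" using b_rel[OF n10] by (simp add: a_def y_def)
  have ang: "arccos y = 2 * pi / real N"
    unfolding y_def using n9 by (intro arccos_cos) (auto simp: field_simps)
  have dh: "2 * pi / real N < dihedral T g \<phi> lt he" if he: "he \<in> e" for he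
  proof -
    obtain p q r s c where pqrsc: "p \<in> {1<..2}" "q \<in> {1<..2}" "r \<in> {1<..2}" "s \<in> {1<..2}" "c \<in> {1<..2}"
      and d: "dihedral T g \<phi> lt he = arccos (max (-1) (min (phi_formula (cosh (lt e)) p q r s c) 1))"
      using dihedral_form[OF M e he lt] by blast
    have p1: "phi_formula a p q r s c \<le> (8 + 8 * a + c - a^2 * c) / (a^2 + 8 * a + 7)"
      using pqrsc a1 by (intro phi_le) auto
    have "(8 + 8 * a + c - a^2 * c) / (a^2 + 8 * a + 7) < (9 - a) / (a + 7)"
    proof -
      have c1: "1 < c" using pqrsc by simp
      have "0 < (c - 1) * (a^2 - 1)" using c1 a1 by (simp add: one_less_power)
      hence lt1: "8 + 8 * a + c - a^2 * c < (9 - a) * (a + 1)" by (simp add: algebra_simps power2_eq_square)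
      have eq: "a^2 + 8 * a + 7 = (a + 7) * (a + 1)" by (simp add: algebra_simps power2_eq_square)
      have pos: "0 < (a + 7) * (a + 1)" using a1 by simp
      have "(8 + 8 * a + c - a^2 * c) / (a^2 + 8 * a + 7) = (8 + 8 * a + c - a^2 * c) / ((a + 7) * (a + 1))"
        by (simp only: eq)
      also have "\<dots> < (9 - a) * (a + 1) / ((a + 7) * (a + 1))" by (rule divide_strict_right_mono[OF lt1 pos])
      also have "\<dots> = (9 - a) / (a + 7)" using a1 by simp
      finally show ?thesis .
    qed
    hence ph: "phi_formula a p q r s c < y" using p1 ya by linarith
    define v where "v = max (-1) (min (phi_formula a p q r s c) 1)"
    have v: "v < y" "-1 \<le> v" using ph y by (auto simp: v_def)
    have "arccos y < arccos v" using v y by (intro arccos_less_arccos) auto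
    thus ?thesis unfolding d ca v_def[symmetric] ang .
  qed
  have fin: "finite e" "e \<noteq> {}" using n9 unfolding N_def valence_def by (auto intro: card_ge_0_finite)
  have "(\<Sum>he\<in>e. 2 * pi / real N) < (\<Sum>he\<in>e. dihedral T g \<phi> lt he)"
    by (rule sum_strict_mono[OF fin]) (use dh in auto)
  moreover have "(\<Sum>he\<in>e. 2 * pi / real N) = 2 * pi" using n9 by (simp add: N_def valence_def)
  ultimately show ?thesis unfolding ext_curv_def by simp
qed

theorem theorem4p7:
  fixes T :: "'a set"
    and g :: "'a \<times> nat \<Rightarrow> 'a \<times> nat"
    and \<phi> :: "'a \<times> nat \<Rightarrow> nat \<Rightarrow> nat"
    and l :: "real \<Rightarrow> ('a \<times> nat set) set \<Rightarrow> real"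
    and l0 :: "('a \<times> nat set) set \<Rightarrow> real"
    and t0 :: real
  assumes M: "closed_pseudo_3_manifold T g \<phi>"
    and val: "\<forall>e\<in>edges T g \<phi>. valence e \<ge> 9"
    and flow: "ext_ricci_flow_solution T g \<phi> l l0"
    and init0: "\<forall>e\<in>edges T g \<phi>. l0 e \<in> {0<..<arcosh 2}"
    and init: "\<forall>e\<in>edges T g \<phi>.
        l0 e \<in> {arcosh (1 + mu_const (valence e))<..<arcosh (b_const (valence e))}"
    and t0: "t0 > 0"
    and bound: "\<forall>t\<in>{0..t0}. \<forall>e\<in>edges T g \<phi>. l t e \<le> arcosh 2"
  shows "\<forall>t\<in>{0..t0}. \<forall>e\<in>edges T g \<phi>.
           l t e \<in> {arcosh (1 + mu_const (valence e))..arcosh (b_const (valence e))} \<and>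
           {arcosh (1 + mu_const (valence e))..arcosh (b_const (valence e))} \<subseteq> {0<..arcosh 2}"
proof (intro ballI)
  fix t e assume t: "t \<in> {0..t0}" and e: "e \<in> edges T g \<phi>"
  have fl: "\<And>e. e \<in> edges T g \<phi> \<Longrightarrow> l 0 e = l0 e"
    "\<And>t e. t \<ge> 0 \<Longrightarrow> e \<in> edges T g \<phi> \<Longrightarrow> l t e > 0"
    "\<And>t e. t \<ge> 0 \<Longrightarrow> e \<in> edges T g \<phi> \<Longrightarrow>
        ((\<lambda>s. l s e) has_real_derivative (ext_curv T g \<phi> (l t) e * l t e)) (at t within {0..})"
    using flow unfolding ext_ricci_flow_solution_def by auto
  have lt: "\<forall>e'\<in>edges T g \<phi>. 0 < l s e' \<and> l s e' \<le> arcosh 2" if "s \<in> {0..t0}" for s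
    using fl(2) bound that by auto
  define N where "N = valence e"
  have n9: "N \<ge> 9" using val e by (simp add: N_def)
  define L where "L = arcosh (1 + mu_const N)"
  define U where "U = arcosh (b_const N)"
  have mu: "0 < mu_const N" using mu_bounds[OF n9] by simp
  have b: "1 < b_const N" "b_const N \<le> 2" using b_bounds[OF n9] by auto
  have L0: "0 < L" unfolding L_def using mu by simp
  have U2: "U \<le> arcosh 2" unfolding U_def using b by (metis arcosh_less_iff_real less_le_not_le linorder_not_le one_le_numeral order_less_imp_le)
  have i: "L < l0 e" "l0 e < U" using init e by (simp_all add: L_def U_def N_def)
  have lower: "\<forall>s\<in>{0..t0}. L \<le> l s e"
  proof (rule barrier_lower[where f' = "\<lambda>s. ext_curv T g \<phi> (l s) e * l s e"])
    show "\<And>s. 0 \<le> s \<Longrightarrow> ((\<lambda>s. l s e) has_real_derivative ext_curv T g \<phi> (l s) e * l s e) (at s within {0..})"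
      using fl(3) e by simp
    show "L < l 0 e" using i fl(1) e by simp
    fix s assume s: "0 \<le> s" "s \<le> t0" "l s e = L"
    have "ext_curv T g \<phi> (l s) e > 0"
      by (rule curv_pos[OF M e]) (use val e lt[of s] s in \<open>auto simp: L_def N_def\<close>)
    moreover have "l s e > 0" using fl(2)[OF s(1) e] .
    ultimately show "0 < ext_curv T g \<phi> (l s) e * l s e" by simp
  qed
  have upper: "\<forall>s\<in>{0..t0}. l s e \<le> U"
  proof (cases "N = 9")
    case True
    hence "U = arcosh 2" by (simp add: U_def b_const_def)
    thus ?thesis using bound e by simp
  next
    case False
    hence n10: "valence e \<ge> 10" using n9 N_def by simp
    show ?thesis
    proof (rule barrier_upper[where f' = "\<lambda>s. ext_curv T g \<phi> (l s) e * l s e"])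
      show "\<And>s. 0 \<le> s \<Longrightarrow> ((\<lambda>s. l s e) has_real_derivative ext_curv T g \<phi> (l s) e * l s e) (at s within {0..})"
        using fl(3) e by simp
      show "l 0 e < U" using i fl(1) e by simp
      fix s assume s: "0 \<le> s" "s \<le> t0" "l s e = U"
      have "ext_curv T g \<phi> (l s) e < 0"
        by (rule curv_neg[OF M e n10]) (use lt[of s] s in \<open>auto simp: U_def N_def\<close>)
      moreover have "l s e > 0" using fl(2)[OF s(1) e] .
      ultimately show "ext_curv T g \<phi> (l s) e * l s e < 0" by (simp add: mult_neg_pos)
    qed
  qed
  show "l t e \<in> {arcosh (1 + mu_const (valence e))..arcosh (b_const (valence e))} \<and>
           {arcosh (1 + mu_const (valence e))..arcosh (b_const (valence e))} \<subseteq> {0<..arcosh 2}"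
    using lower upper t L0 U2 unfolding L_def U_def N_def by auto
qed

end
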